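(* In the MDC-ADMM algorithm, the objective $S(\boldsymbol{\mu},\boldsymbol{\theta})$ converges in a finite number of steps; that is, there is an $m^*<\infty$ with $$S\left(\boldsymbol{\mu}^{(m)},\boldsymbol{\theta}^{(m)}\right)=S\left(\boldsymbol{\mu}^{(m^* )},\boldsymbol{\theta}^{(m^* )}\right)\quad\text{for all } m \ge m^*.$$ Moreover, $\left(\boldsymbol{\mu}^{(m^* )},\boldsymbol{\theta}^{(m^* )}\right)$ is a KKT point of the constrained problem of minimizing $S(\boldsymbol{\mu},\boldsymbol{\theta})$ subject to $\boldsymbol{\theta}_{ij}=\boldsymbol{\mu}_i-\boldsymbol{\mu}_j$, $1\le i<j\le n$.
   Context: Given observations $\mathbf{x}_1,\dots,\mathbf{x}_n\in\mathbb{R}^p$, with centroids $\boldsymbol{\mu}_i\in\mathbb{R}^p$, consider the problem $$\min_{\boldsymbol{\mu},\boldsymbol{\theta}} S(\boldsymbol{\mu},\boldsymbol{\theta})=\frac12\sum_{i=1}^n\|\mathbf{x}_i-\boldsymbol{\mu}_i\|_2^2+\lambda_1\sum_{i=1}^n\|\boldsymbol{\mu}_i\|_1+\lambda_2\sum_{i<j}\mathrm{TLP}(\|\boldsymbol{\theta}_{ij}\|_2;\tau)\quad\text{s.t. }\boldsymbol{\theta}_{ij}=\boldsymbol{\mu}_i-\boldsymbol{\mu}_j,\ 1\le i<j\le n,$$ where $\mathrm{TLP}(a,b)=\min(|a|,b)$ and $\lambda_1,\lambda_2,\tau>0$. Write $S=S_1-S_2$ with $S_1(\boldsymbol{\mu},\boldsymbol{\theta})=\frac12\sum_i\|\mathbf{x}_i-\boldsymbol{\mu}_i\|_2^2+\lambda_1\sum_i\|\boldsymbol{\mu}_i\|_1+\lambda_2\sum_{i<j}\|\boldsymbol{\theta}_{ij}\|_2$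 and $S_2(\boldsymbol{\theta})=\lambda_2\sum_{i<j}(\|\boldsymbol{\theta}_{ij}\|_2-\tau)_+$, both convex. MDC-ADMM (a difference-of-convex algorithm combined with ADMM) is: initialize $\hat{\boldsymbol{\mu}}_i^{(0)}=\mathbf{x}_i$, $\hat{\boldsymbol{\theta}}_{ij}^{(0)}=\mathbf{x}_i-\mathbf{x}_j$, dual variables $\hat{\mathbf{v}}_{ij}^{(0)}=\mathbf{0}$; at outer step $m$ replace $S$ by the convex upper approximation $$S^{(m+1)}(\boldsymbol{\mu},\boldsymbol{\theta})=\frac12\sum_i\|\mathbf{x}_i-\boldsymbol{\mu}_i\|_2^2+\lambda_1\sum_i\|\boldsymbol{\mu}_i\|_1+\lambda_2\sum_{i<j}\|\boldsymbol{\theta}_{ij}\|_2 I(\|\hat{\boldsymbol{\theta}}^{(m)}_{ij}\|_2<\tau)+\lambda_2\tau\sum_{i<j}I(\|\hat{\boldsymbol{\theta}}^{(m)}_{ij}\|_2\ge\tau),$$ minimize it subject to $\boldsymbol{\theta}_{ij}=\boldsymbol{\mu}_i-\boldsymbol{\mu}_j$ by ADMM (scaled augmented Lagrangian with penalty parameter $\rho>0$; $\boldsymbol{\mu}_i$-updates are LASSO problems solved by cyclic coordinate descent, $\boldsymbol{\theta}_{ij}$-updates by group soft-thresholding, and $\mathbf{v}_{ij}\leftarrow\mathbf{v}_{ij}+\boldsymbol{\theta}_{ij}-(\boldsymbol{\mu}_i-\boldsymbol{\mu}_j)$), run ADMM to convergence to get $(\hat{\boldsymbol{\mu}}^{(m+1)},\hat{\boldsymbol{\theta}}^{(m+1)})$,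 and repeat while $S$ strictly decreases. *)

theory Defs
  imports "HOL-Analysis.Analysis"
begin

text \<open>Observations x_1..x_n are indexed by i < n (0-based); centroids mu i, pairwise
  differences theta i j for i < j < n.  Vectors live in real^'p (p = CARD('p)).\<close>

definition l1norm :: "real^'p \<Rightarrow> real" where
  "l1norm v = (\<Sum>k\<in>UNIV. \<bar>v $ k\<bar>)"

definition TLP :: "real \<Rightarrow> real \<Rightarrow> real" where
  "TLP a b = min \<bar>a\<bar> b"

definition pairs :: "nat \<Rightarrow> (nat \<times> nat) set" where
  "pairs n = {(i, j). i < j \<and> j < n}"

definition S_obj :: "nat \<Rightarrow> (nat \<Rightarrow> real^'p) \<Rightarrow> real \<Rightarrow> real \<Rightarrow> real
    \<Rightarrow> (nat \<Rightarrow> real^'p) \<Rightarrow> (nat \<Rightarrow> nat \<Rightarrow> real^'p) \<Rightarrow> real" where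
  "S_obj n x lam1 lam2 tau mu th =
     (1/2) * (\<Sum>i<n. (norm (x i - mu i))\<^sup>2) + lam1 * (\<Sum>i<n. l1norm (mu i))
     + lam2 * (\<Sum>(i, j)\<in>pairs n. TLP (norm (th i j)) tau)"

definition S1 :: "nat \<Rightarrow> (nat \<Rightarrow> real^'p) \<Rightarrow> real \<Rightarrow> real
    \<Rightarrow> (nat \<Rightarrow> real^'p) \<Rightarrow> (nat \<Rightarrow> nat \<Rightarrow> real^'p) \<Rightarrow> real" where
  "S1 n x lam1 lam2 mu th =
     (1/2) * (\<Sum>i<n. (norm (x i - mu i))\<^sup>2) + lam1 * (\<Sum>i<n. l1norm (mu i))
     + lam2 * (\<Sum>(i, j)\<in>pairs n. norm (th i j))"

text \<open>Convex part S_2 (S = S_1 - S_2).\<close>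
definition S2 :: "nat \<Rightarrow> real \<Rightarrow> real \<Rightarrow> (nat \<Rightarrow> nat \<Rightarrow> real^'p) \<Rightarrow> real" where
  "S2 n lam2 tau th = lam2 * (\<Sum>(i, j)\<in>pairs n. max (norm (th i j) - tau) 0)"

definition feasible :: "nat \<Rightarrow> (nat \<Rightarrow> real^'p) \<Rightarrow> (nat \<Rightarrow> nat \<Rightarrow> real^'p) \<Rightarrow> bool" where
  "feasible n mu th \<longleftrightarrow> (\<forall>(i, j)\<in>pairs n. th i j = mu i - mu j)"

text \<open>The convex upper approximation S^(m+1), built from the previous iterate thhat.\<close>
definition S_surr :: "nat \<Rightarrow> (nat \<Rightarrow> real^'p) \<Rightarrow> real \<Rightarrow> real \<Rightarrow> real
    \<Rightarrow> (nat \<Rightarrow> nat \<Rightarrow> real^'p)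
    \<Rightarrow> (nat \<Rightarrow> real^'p) \<Rightarrow> (nat \<Rightarrow> nat \<Rightarrow> real^'p) \<Rightarrow> real" where
  "S_surr n x lam1 lam2 tau thhat mu th =
     (1/2) * (\<Sum>i<n. (norm (x i - mu i))\<^sup>2) + lam1 * (\<Sum>i<n. l1norm (mu i))
     + lam2 * (\<Sum>(i, j)\<in>pairs n. norm (th i j) * (if norm (thhat i j) < tau then 1 else 0))
     + lam2 * tau * (\<Sum>(i, j)\<in>pairs n. if norm (thhat i j) \<ge> tau then 1 else 0)"

text \<open>One outer MDC step: (mu', th') is the solution (the limit of ADMM) of the convex
  subproblem: minimize S^(m+1) subject to the linear constraints.\<close>
definition mdc_step :: "nat \<Rightarrow> (nat \<Rightarrow> real^'p) \<Rightarrow> real \<Rightarrow> real \<Rightarrow> real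
    \<Rightarrow> (nat \<Rightarrow> nat \<Rightarrow> real^'p)
    \<Rightarrow> (nat \<Rightarrow> real^'p) \<Rightarrow> (nat \<Rightarrow> nat \<Rightarrow> real^'p) \<Rightarrow> bool" where
  "mdc_step n x lam1 lam2 tau thhat mu' th' \<longleftrightarrow>
     feasible n mu' th' \<and>
     (\<forall>mu th. feasible n mu th \<longrightarrow>
        S_surr n x lam1 lam2 tau thhat mu' th' \<le> S_surr n x lam1 lam2 tau thhat mu th)"

text \<open>KKT point of min S = S_1 - S_2 s.t. theta_ij = mu_i - mu_j (DC-critical point):
  feasibility, and there are Lagrange multipliers y_ij and a subgradient g of the convex
  function S_2 at theta such that 0 lies in the subdifferential (in (mu,theta)) of
  S_1 - <g, .> + sum_ij <y_ij, theta_ij - (mu_i - mu_j)>, i.e. the point minimises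
  this convex function.\<close>
definition KKT_point :: "nat \<Rightarrow> (nat \<Rightarrow> real^'p) \<Rightarrow> real \<Rightarrow> real \<Rightarrow> real
    \<Rightarrow> (nat \<Rightarrow> real^'p) \<Rightarrow> (nat \<Rightarrow> nat \<Rightarrow> real^'p) \<Rightarrow> bool" where
  "KKT_point n x lam1 lam2 tau mu th \<longleftrightarrow>
     feasible n mu th \<and>
     (\<exists>(y :: nat \<Rightarrow> nat \<Rightarrow> real^'p) (g :: nat \<Rightarrow> nat \<Rightarrow> real^'p).
        (\<forall>th'. S2 n lam2 tau th' \<ge>
            S2 n lam2 tau th + (\<Sum>(i, j)\<in>pairs n. g i j \<bullet> (th' i j - th i j))) \<and>
        (\<forall>mu' th'. S1 n x lam1 lam2 mu' th'
            - (\<Sum>(i, j)\<in>pairs n. g i j \<bullet> (th' i j - th i j))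
            + (\<Sum>(i, j)\<in>pairs n. y i j \<bullet> (th' i j - (mu' i - mu' j)))
          \<ge> S1 n x lam1 lam2 mu th))"

end

theory Submission
  imports Defs
begin


lemma one_step:
  fixes f l :: "'v \<Rightarrow> real" and cmb :: "real \<Rightarrow> 'v \<Rightarrow> 'v \<Rightarrow> 'v"
  assumes Wc: "\<forall>u\<in>W. \<forall>w\<in>W. \<forall>t. cmb t u w \<in> W"
    and fc: "\<forall>u\<in>W. \<forall>w\<in>W. \<forall>t. 0 \<le> t \<and> t \<le> 1 \<longrightarrow> f (cmb t u w) \<le> t * f u + (1-t) * f w"
    and la: "\<forall>u w t. l (cmb t u w) = t * l u + (1-t) * l w"
    and zW: "z \<in> W" and lz: "l z = 0"
    and mn: "\<forall>v\<in>W. l v = 0 \<longrightarrow> f z \<le> f v"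
  shows "\<exists>c. \<forall>v\<in>W. f z \<le> f v + c * l v"
proof -
  define P where "P = {v\<in>W. l v > 0}"
  define N where "N = {v\<in>W. l v < 0}"
  have key: "(f z - f v) / l v \<le> (f w - f z) / (- l w)" if v: "v \<in> P" and w: "w \<in> N" for v w
  proof -
    have lv: "l v > 0" "v \<in> W" using v P_def by auto
    have lw: "l w < 0" "w \<in> W" using w N_def by auto
    define t where "t = - l w / (l v - l w)"
    have t01: "0 \<le> t" "t \<le> 1" using lv lw by (auto simp: t_def field_simps)
    have omt: "1 - t = l v / (l v - l w)" using lv lw by (simp add: t_def field_simps)
    have "l (cmb t v w) = t * l v + (1-t) * l w" using la by blast
    also have "\<dots> = 0" using lv lw by (simp add: omt t_def field_simps)
    finally have l0: "l (cmb t v w) = 0" .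
    have "f z \<le> f (cmb t v w)" using mn Wc lv lw l0 by blast
    also have "\<dots> \<le> t * f v + (1-t) * f w" using fc lv lw t01 by blast
    finally have "0 \<le> t * (f v - f z) + (1-t) * (f w - f z)" by (simp add: algebra_simps)
    hence "0 \<le> (l v - l w) * (t * (f v - f z) + (1-t) * (f w - f z))" using lv lw by simp
    also have "\<dots> = ((l v - l w) * t) * (f v - f z) + ((l v - l w) * (1-t)) * (f w - f z)"
      by (simp add: algebra_simps)
    also have "(l v - l w) * t = - l w" using lv lw by (simp add: t_def)
    also have "(l v - l w) * (1-t) = l v" using lv lw by (simp add: omt)
    finally have h: "0 \<le> - l w * (f v - f z) + l v * (f w - f z)" .
    have "(f z - f v) / l v \<le> (f w - f z) / (- l w) \<longleftrightarrow> (f z - f v) * (- l w) \<le> (f w - f z) * l v"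
      using lv lw by (simp add: divide_simps) (simp add: algebra_simps)
    thus ?thesis using h by (simp add: algebra_simps)
  qed
  show ?thesis
  proof (cases "P = {}")
    case True
    have "N = {}"
    proof (rule ccontr)
      assume "N \<noteq> {}" then obtain w where w: "w \<in> W" "l w < 0" using N_def by auto
      have "cmb (-1) w z \<in> W" using Wc w zW by blast
      moreover have "l (cmb (-1) w z) = - l w" using la lz by simp
      ultimately have "cmb (-1) w z \<in> P" using w P_def by auto
      thus False using True by auto
    qed
    hence "\<forall>v\<in>W. l v = 0" using True P_def N_def by (auto simp: linorder_neq_iff)
    thus ?thesis using mn by (intro exI[of _ 0]) auto
  next
    case False
    have "N \<noteq> {}"
    proof
      assume Ne: "N = {}"
      obtain v where v: "v \<in> W" "l v > 0" using False P_def by auto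
      have "cmb (-1) v z \<in> W" using Wc v zW by blast
      moreover have "l (cmb (-1) v z) = - l v" using la lz by simp
      ultimately have "cmb (-1) v z \<in> N" using v N_def by auto
      thus False using Ne by auto
    qed
    then obtain w0 where w0: "w0 \<in> N" by auto
    define c where "c = Sup ((\<lambda>v. (f z - f v) / l v) ` P)"
    have bdd: "bdd_above ((\<lambda>v. (f z - f v) / l v) ` P)"
      using key w0 by (intro bdd_aboveI[of _ "(f w0 - f z) / (- l w0)"]) auto
    have c1: "(f z - f v) / l v \<le> c" if "v \<in> P" for v
      unfolding c_def using bdd that by (intro cSup_upper) auto
    have c2: "c \<le> (f w - f z) / (- l w)" if "w \<in> N" for w
      unfolding c_def using False key that by (intro cSup_least) auto
    show ?thesis
    proof (intro exI ballI)
      fix v assume v: "v \<in> W"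
      consider "l v > 0" | "l v < 0" | "l v = 0" by linarith
      thus "f z \<le> f v + c * l v"
      proof cases
        case 1
        hence "(f z - f v) / l v \<le> c" using c1 v P_def by auto
        thus ?thesis using 1 by (simp add: divide_simps algebra_simps)
      next
        case 2
        hence "c \<le> (f v - f z) / (- l v)" using c2 v N_def by auto
        thus ?thesis using 2 by (simp add: divide_simps algebra_simps)
      next
        case 3 thus ?thesis using mn v by simp
      qed
    qed
  qed
qed

lemma multi:
  fixes L :: "'a \<Rightarrow> 'v \<Rightarrow> real" and cmb :: "real \<Rightarrow> 'v \<Rightarrow> 'v \<Rightarrow> 'v"
  assumes "finite I"
  shows "\<forall>W f. (\<forall>u\<in>W. \<forall>w\<in>W. \<forall>t. cmb t u w \<in> W) \<longrightarrow>
    (\<forall>u\<in>W. \<forall>w\<in>W. \<forall>t. 0 \<le> t \<and> t \<le> 1 \<longrightarrow> f (cmb t u w) \<le> t * f u + (1-t) * f w) \<longrightarrow>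
    (\<forall>a\<in>I. \<forall>u w t. L a (cmb t u w) = t * L a u + (1-t) * L a w) \<longrightarrow>
    z \<in> W \<longrightarrow> (\<forall>a\<in>I. L a z = 0) \<longrightarrow>
    (\<forall>v\<in>W. (\<forall>a\<in>I. L a v = 0) \<longrightarrow> f z \<le> f v) \<longrightarrow>
    (\<exists>c. \<forall>v\<in>W. f z \<le> f v + (\<Sum>a\<in>I. c a * L a v))"
  using assms
proof (induction I rule: finite_induct)
  case empty
  then show ?case by simp
next
  case (insert a I)
  show ?case
  proof (intro allI impI)
    fix W and f :: "'v \<Rightarrow> real"
    assume Wc: "\<forall>u\<in>W. \<forall>w\<in>W. \<forall>t. cmb t u w \<in> W"
      and fc: "\<forall>u\<in>W. \<forall>w\<in>W. \<forall>t. 0 \<le> t \<and> t \<le> 1 \<longrightarrow> f (cmb t u w) \<le> t * f u + (1-t) * f w"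
      and la: "\<forall>b\<in>insert a I. \<forall>u w t. L b (cmb t u w) = t * L b u + (1-t) * L b w"
      and zW: "z \<in> W" and lz: "\<forall>b\<in>insert a I. L b z = 0"
      and mn: "\<forall>v\<in>W. (\<forall>b\<in>insert a I. L b v = 0) \<longrightarrow> f z \<le> f v"
    define W' where "W' = {v\<in>W. \<forall>b\<in>I. L b v = 0}"
    have "\<exists>c. \<forall>v\<in>W'. f z \<le> f v + c * L a v"
    proof (rule one_step[where cmb=cmb])
      show "\<forall>u\<in>W'. \<forall>w\<in>W'. \<forall>t. cmb t u w \<in> W'" using Wc la unfolding W'_def by auto
      show "\<forall>u\<in>W'. \<forall>w\<in>W'. \<forall>t. 0 \<le> t \<and> t \<le> 1 \<longrightarrow> f (cmb t u w) \<le> t * f u + (1-t) * f w"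
        using fc unfolding W'_def by auto
      show "\<forall>u w t. L a (cmb t u w) = t * L a u + (1-t) * L a w" using la by auto
      show "z \<in> W'" using zW lz unfolding W'_def by auto
      show "L a z = 0" using lz by auto
      show "\<forall>v\<in>W'. L a v = 0 \<longrightarrow> f z \<le> f v" using mn unfolding W'_def by auto
    qed
    then obtain c0 where c0: "\<forall>v\<in>W'. f z \<le> f v + c0 * L a v" by blast
    define f' where "f' = (\<lambda>v. f v + c0 * L a v)"
    have p1: "\<forall>u\<in>W. \<forall>w\<in>W. \<forall>t. cmb t u w \<in> W" by fact
    have p2: "\<forall>u\<in>W. \<forall>w\<in>W. \<forall>t. 0 \<le> t \<and> t \<le> 1 \<longrightarrow> f' (cmb t u w) \<le> t * f' u + (1-t) * f' w"
    proof (intro ballI allI impI)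
      fix u w and t :: real assume "u \<in> W" "w \<in> W" "0 \<le> t \<and> t \<le> 1"
      hence "f (cmb t u w) \<le> t * f u + (1-t) * f w" using fc by blast
      moreover have eq: "L a (cmb t u w) = t * L a u + (1-t) * L a w" using la by blast
      ultimately show "f' (cmb t u w) \<le> t * f' u + (1-t) * f' w"
        unfolding f'_def eq by (simp add: algebra_simps)
    qed
    have p3: "\<forall>b\<in>I. \<forall>u w t. L b (cmb t u w) = t * L b u + (1-t) * L b w" using la by auto
    have p4: "z \<in> W" by fact
    have p5: "\<forall>b\<in>I. L b z = 0" using lz by auto
    have p6: "\<forall>v\<in>W. (\<forall>b\<in>I. L b v = 0) \<longrightarrow> f' z \<le> f' v"
      using c0 lz unfolding W'_def f'_def by auto
    have "\<exists>c. \<forall>v\<in>W. f' z \<le> f' v + (\<Sum>b\<in>I. c b * L b v)"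
      using insert.IH[THEN spec[of _ W], THEN spec[of _ f'], THEN mp, THEN mp, THEN mp, THEN mp, THEN mp, THEN mp, OF p1 p2 p3 p4 p5 p6] .
    then obtain c where c: "\<forall>v\<in>W. f' z \<le> f' v + (\<Sum>b\<in>I. c b * L b v)" by blast
    show "\<exists>c. \<forall>v\<in>W. f z \<le> f v + (\<Sum>b\<in>insert a I. c b * L b v)"
    proof (intro exI[of _ "c(a := c0)"] ballI)
      fix v assume v: "v \<in> W"
      have s: "(\<Sum>b\<in>insert a I. (c(a := c0)) b * L b v) = c0 * L a v + (\<Sum>b\<in>I. c b * L b v)"
      proof -
        have "(\<Sum>b\<in>insert a I. (c(a := c0)) b * L b v) = (c(a := c0)) a * L a v + (\<Sum>b\<in>I. (c(a := c0)) b * L b v)"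
          using insert.hyps by (simp add: sum.insert)
        moreover have "(\<Sum>b\<in>I. (c(a := c0)) b * L b v) = (\<Sum>b\<in>I. c b * L b v)"
          using insert.hyps by (intro sum.cong) auto
        ultimately show ?thesis by simp
      qed
      show "f z \<le> f v + (\<Sum>b\<in>insert a I. (c(a := c0)) b * L b v)"
        using c v lz unfolding s f'_def by auto
    qed
  qed
qed



lemma finite_pairs: "finite (pairs n)"
  by (rule finite_subset[of _ "{..<n} \<times> {..<n}"]) (auto simp: pairs_def)

lemma cvx_norm: "0 \<le> t \<Longrightarrow> t \<le> 1 \<Longrightarrow>
   norm (t *\<^sub>R a + (1-t) *\<^sub>R b) \<le> t * norm a + (1-t) * norm (b :: 'a::real_normed_vector)"
  by (metis abs_of_nonneg diff_ge_0_iff_ge norm_scaleR norm_triangle_ineq)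

lemma cvx_sq: assumes "0 \<le> t" "t \<le> 1"
  shows "(norm (x - (t *\<^sub>R a + (1-t) *\<^sub>R b)))\<^sup>2 \<le> t * (norm (x - a))\<^sup>2 + (1-t) * (norm (x - (b :: 'a::real_normed_vector)))\<^sup>2"
proof -
  have e: "x - (t *\<^sub>R a + (1-t) *\<^sub>R b) = t *\<^sub>R (x - a) + (1-t) *\<^sub>R (x - b)"
    by (simp add: algebra_simps)
  have "norm (x - (t *\<^sub>R a + (1-t) *\<^sub>R b)) \<le> t * norm (x-a) + (1-t) * norm (x-b)"
    unfolding e using cvx_norm assms by blast
  hence "(norm (x - (t *\<^sub>R a + (1-t) *\<^sub>R b)))\<^sup>2 \<le> (t * norm (x-a) + (1-t) * norm (x-b))\<^sup>2"
    by (intro power_mono) auto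
  also have "\<dots> = t * (norm (x - a))\<^sup>2 + (1-t) * (norm (x - b))\<^sup>2 - t * (1-t) * (norm (x-a) - norm (x-b))\<^sup>2"
    by (simp add: power2_eq_square algebra_simps)
  also have "\<dots> \<le> t * (norm (x - a))\<^sup>2 + (1-t) * (norm (x - b))\<^sup>2"
    using assms by simp
  finally show ?thesis .
qed

lemma cvx_l1: assumes "0 \<le> t" "t \<le> 1"
  shows "l1norm (t *\<^sub>R a + (1-t) *\<^sub>R b) \<le> t * l1norm a + (1-t) * l1norm b"
proof -
  have "l1norm (t *\<^sub>R a + (1-t) *\<^sub>R b) \<le> (\<Sum>k\<in>UNIV. t * \<bar>a $ k\<bar> + (1-t) * \<bar>b $ k\<bar>)"
    unfolding l1norm_def
  proof (rule sum_mono)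
    fix k
    have "\<bar>t * a $ k + (1-t) * b $ k\<bar> \<le> \<bar>t * a $ k\<bar> + \<bar>(1-t) * b $ k\<bar>" by (rule abs_triangle_ineq)
    also have "\<dots> = t * \<bar>a $ k\<bar> + (1-t) * \<bar>b $ k\<bar>" using assms by (simp add: abs_mult)
    finally show "\<bar>(t *\<^sub>R a + (1-t) *\<^sub>R b) $ k\<bar> \<le> t * \<bar>a $ k\<bar> + (1-t) * \<bar>b $ k\<bar>" by simp
  qed
  also have "\<dots> = t * l1norm a + (1-t) * l1norm b"
    by (simp add: l1norm_def sum.distrib sum_distrib_left)
  finally show ?thesis .
qed

lemma sum_cvx: "(\<And>i. i \<in> A \<Longrightarrow> F i \<le> t * G i + (1-t) * H i) \<Longrightarrow>
   sum F A \<le> t * sum G A + (1-t) * (sum H A :: real)"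
proof -
  assume "\<And>i. i \<in> A \<Longrightarrow> F i \<le> t * G i + (1-t) * H i"
  hence "sum F A \<le> (\<Sum>i\<in>A. t * G i + (1-t) * H i)" by (rule sum_mono)
  thus ?thesis by (simp add: sum.distrib sum_distrib_left)
qed

definition pcmb :: "real \<Rightarrow> (nat \<Rightarrow> real^'p) \<times> (nat \<Rightarrow> nat \<Rightarrow> real^'p)
   \<Rightarrow> (nat \<Rightarrow> real^'p) \<times> (nat \<Rightarrow> nat \<Rightarrow> real^'p) \<Rightarrow> (nat \<Rightarrow> real^'p) \<times> (nat \<Rightarrow> nat \<Rightarrow> real^'p)" where
  "pcmb t u w = ((\<lambda>i. t *\<^sub>R fst u i + (1-t) *\<^sub>R fst w i), (\<lambda>i j. t *\<^sub>R snd u i j + (1-t) *\<^sub>R snd w i j))"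

lemma S1_cvx: assumes "0 \<le> t" "t \<le> 1" "lam1 \<ge> 0" "lam2 \<ge> 0"
  shows "S1 n x lam1 lam2 (fst (pcmb t u w)) (snd (pcmb t u w))
     \<le> t * S1 n x lam1 lam2 (fst u) (snd u) + (1-t) * S1 n x lam1 lam2 (fst w) (snd w)"
proof -
  have a: "(\<Sum>i<n. (norm (x i - fst (pcmb t u w) i))\<^sup>2) \<le> t * (\<Sum>i<n. (norm (x i - fst u i))\<^sup>2) + (1-t) * (\<Sum>i<n. (norm (x i - fst w i))\<^sup>2)"
    by (rule sum_cvx) (simp add: pcmb_def cvx_sq assms)
  have b: "(\<Sum>i<n. l1norm (fst (pcmb t u w) i)) \<le> t * (\<Sum>i<n. l1norm (fst u i)) + (1-t) * (\<Sum>i<n. l1norm (fst w i))"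
    by (rule sum_cvx) (simp add: pcmb_def cvx_l1 assms)
  have c: "(\<Sum>(i, j)\<in>pairs n. norm (snd (pcmb t u w) i j)) \<le> t * (\<Sum>(i, j)\<in>pairs n. norm (snd u i j)) + (1-t) * (\<Sum>(i, j)\<in>pairs n. norm (snd w i j))"
    by (rule sum_cvx) (auto simp: pcmb_def cvx_norm assms)
  have "S1 n x lam1 lam2 (fst (pcmb t u w)) (snd (pcmb t u w)) \<le>
     (1/2) * (t * (\<Sum>i<n. (norm (x i - fst u i))\<^sup>2) + (1-t) * (\<Sum>i<n. (norm (x i - fst w i))\<^sup>2))
     + lam1 * (t * (\<Sum>i<n. l1norm (fst u i)) + (1-t) * (\<Sum>i<n. l1norm (fst w i)))
     + lam2 * (t * (\<Sum>(i, j)\<in>pairs n. norm (snd u i j)) + (1-t) * (\<Sum>(i, j)\<in>pairs n. norm (snd w i j)))"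
    unfolding S1_def using a b c assms
    by (intro add_mono mult_left_mono) auto
  also have "\<dots> = t * S1 n x lam1 lam2 (fst u) (snd u) + (1-t) * S1 n x lam1 lam2 (fst w) (snd w)"
    by (simp add: S1_def field_simps)
  finally show ?thesis .
qed

lemma lin_cvx: "(\<Sum>(i, j)\<in>pairs n. (g i j :: real^'p) \<bullet> (snd (pcmb t u w) i j - T i j))
   = t * (\<Sum>(i, j)\<in>pairs n. g i j \<bullet> (snd u i j - T i j)) + (1-t) * (\<Sum>(i, j)\<in>pairs n. g i j \<bullet> (snd w i j - T i j))"
proof -
  have "(\<Sum>(i, j)\<in>pairs n. g i j \<bullet> (snd (pcmb t u w) i j - T i j))
     = (\<Sum>(i, j)\<in>pairs n. t * (g i j \<bullet> (snd u i j - T i j)) + (1-t) * (g i j \<bullet> (snd w i j - T i j)))"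
    by (intro sum.cong) (auto simp: pcmb_def inner_diff_right inner_add_right algebra_simps)
  also have "\<dots> = t * (\<Sum>(i, j)\<in>pairs n. g i j \<bullet> (snd u i j - T i j)) + (1-t) * (\<Sum>(i, j)\<in>pairs n. g i j \<bullet> (snd w i j - T i j))"
    by (simp add: split_def sum.distrib sum_distrib_left)
  finally show ?thesis .
qed



lemma kkt_from_min:
  fixes x Mu :: "nat \<Rightarrow> real^'p" and T :: "nat \<Rightarrow> nat \<Rightarrow> real^'p"
  assumes l1: "lam1 > 0" and l2: "lam2 > 0" and tp: "tau > 0"
    and fe: "feasible n Mu T"
    and mn: "\<forall>a b. feasible n a b \<longrightarrow> S_surr n x lam1 lam2 tau T Mu T \<le> S_surr n x lam1 lam2 tau T a b"
  shows "KKT_point n x lam1 lam2 tau Mu T"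
proof -
  define g where "g = (\<lambda>i j. if norm (T i j) < tau then (0::real^'p) else (lam2 / norm (T i j)) *\<^sub>R T i j)"
  define ind where "ind = (\<lambda>i j. if norm (T i j) < tau then (1::real) else 0)"
  define ind2 where "ind2 = (\<lambda>i j. if norm (T i j) \<ge> tau then (1::real) else 0)"
  define D where "D = (\<lambda>i j t. lam2 * norm t - g i j \<bullet> (t - T i j) - lam2 * norm t * ind i j - lam2 * tau * ind2 i j)"
  define f where "f = (\<lambda>u. S1 n x lam1 lam2 (fst u) (snd u) - (\<Sum>(i, j)\<in>pairs n. g i j \<bullet> (snd u i j - T i j)))"
  have Dge: "D i j (T i j) \<le> D i j t" for i j t
  proof (cases "norm (T i j) < tau")
    case True thus ?thesis by (simp add: D_def g_def ind_def ind2_def)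
  next
    case False
    hence nT: "norm (T i j) > 0" using tp by linarith
    have cs: "T i j \<bullet> t \<le> norm (T i j) * norm t" by (rule norm_cauchy_schwarz)
    have "(lam2 / norm (T i j)) * (T i j \<bullet> t) \<le> (lam2 / norm (T i j)) * (norm (T i j) * norm t)"
      using cs l2 nT by (intro mult_left_mono) auto
    also have "\<dots> = lam2 * norm t" using nT by simp
    finally have h: "(lam2 / norm (T i j)) * (T i j \<bullet> t) \<le> lam2 * norm t" .
    have TT: "T i j \<bullet> T i j = norm (T i j) * norm (T i j)" by (simp add: power2_eq_square[symmetric] power2_norm_eq_inner)
    show ?thesis using False h nT TT
      by (simp add: D_def g_def ind_def ind2_def inner_diff_right algebra_simps)
  qed
  have decomp: "f (a, b) = S_surr n x lam1 lam2 tau T a b + (\<Sum>(i, j)\<in>pairs n. D i j (b i j))" for a b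
  proof -
    have "(\<Sum>(i, j)\<in>pairs n. D i j (b i j)) = lam2 * (\<Sum>(i, j)\<in>pairs n. norm (b i j))
       - (\<Sum>(i, j)\<in>pairs n. g i j \<bullet> (b i j - T i j))
       - lam2 * (\<Sum>(i, j)\<in>pairs n. norm (b i j) * ind i j) - lam2 * tau * (\<Sum>(i, j)\<in>pairs n. ind2 i j)"
      by (simp add: D_def split_def sum_subtractf sum_distrib_left mult.assoc)
    thus ?thesis by (simp add: f_def S1_def S_surr_def ind_def ind2_def)
  qed
  have fmin: "f (Mu, T) \<le> f (a, b)" if "feasible n a b" for a b
  proof -
    have "f (Mu, T) = S_surr n x lam1 lam2 tau T Mu T + (\<Sum>(i, j)\<in>pairs n. D i j (T i j))" by (rule decomp)
    also have "\<dots> \<le> S_surr n x lam1 lam2 tau T a b + (\<Sum>(i, j)\<in>pairs n. D i j (b i j))"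
      using mn that Dge by (intro add_mono sum_mono) auto
    also have "\<dots> = f (a, b)" by (rule decomp[symmetric])
    finally show ?thesis .
  qed
  have fz: "f (Mu, T) = S1 n x lam1 lam2 Mu T" by (simp add: f_def)
  define L where "L = (\<lambda>(a :: (nat \<times> nat) \<times> 'p) (u :: (nat \<Rightarrow> real^'p) \<times> (nat \<Rightarrow> nat \<Rightarrow> real^'p)).
      (snd u (fst (fst a)) (snd (fst a)) - (fst u (fst (fst a)) - fst u (snd (fst a)))) $ snd a)"
  have q1: "\<forall>u\<in>UNIV. \<forall>w\<in>UNIV. \<forall>t. pcmb t u w \<in> UNIV" by simp
  have q2: "\<forall>u\<in>UNIV. \<forall>w\<in>UNIV. \<forall>t. 0 \<le> t \<and> t \<le> 1 \<longrightarrow> f (pcmb t u w) \<le> t * f u + (1 - t) * f w"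
  proof (intro ballI allI impI)
    fix u w and t :: real assume that: "0 \<le> t \<and> t \<le> 1"
    show "f (pcmb t u w) \<le> t * f u + (1 - t) * f w"
      using S1_cvx[of t lam1 lam2 n x u w] lin_cvx[where n=n and g=g and t=t and u=u and w=w and T=T] that l1 l2
      unfolding f_def by (simp add: algebra_simps)
  qed
  have q3: "\<forall>a\<in>pairs n \<times> UNIV. \<forall>u w t. L a (pcmb t u w) = t * L a u + (1 - t) * L a w"
    by (simp add: L_def pcmb_def split_def algebra_simps)
  have q4: "(Mu, T) \<in> UNIV" by simp
  have q5: "\<forall>a\<in>pairs n \<times> UNIV. L a (Mu, T) = 0"
    using fe by (auto simp: L_def feasible_def)
  have q6: "\<forall>v\<in>UNIV. (\<forall>a\<in>pairs n \<times> UNIV. L a v = 0) \<longrightarrow> f (Mu, T) \<le> f v"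
  proof (intro ballI impI)
    fix v :: "(nat \<Rightarrow> real^'p) \<times> (nat \<Rightarrow> nat \<Rightarrow> real^'p)"
    assume "\<forall>a\<in>pairs n \<times> UNIV. L a v = 0"
    hence "feasible n (fst v) (snd v)"
      by (auto simp: feasible_def L_def vec_eq_iff)
    thus "f (Mu, T) \<le> f v" using fmin[of "fst v" "snd v"] by simp
  qed
  have fin: "finite (pairs n \<times> (UNIV :: 'p set))" by (simp add: finite_pairs)
  have ex: "\<exists>c. \<forall>v\<in>UNIV. f (Mu, T) \<le> f v + (\<Sum>a\<in>pairs n \<times> UNIV. c a * L a v)"
    using multi[OF fin, where cmb=pcmb and z="(Mu, T)" and L=L, THEN spec[of _ UNIV], THEN spec[of _ f],
      THEN mp, THEN mp, THEN mp, THEN mp, THEN mp, THEN mp, OF q1 q2 q3 q4 q5 q6] .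
  then obtain c where c: "\<forall>v. f (Mu, T) \<le> f v + (\<Sum>a\<in>pairs n \<times> UNIV. c a * L a v)" by blast
  define y where "y = (\<lambda>i j. \<chi> k. c ((i, j), k))"
  have ysum: "(\<Sum>(i, j)\<in>pairs n. y i j \<bullet> (th' i j - (mu' i - mu' j)))
      = (\<Sum>a\<in>pairs n \<times> UNIV. c a * L a (mu', th'))" for mu' th'
  proof -
    have "(\<Sum>(i, j)\<in>pairs n. y i j \<bullet> (th' i j - (mu' i - mu' j)))
        = (\<Sum>p\<in>pairs n. \<Sum>k\<in>UNIV. c (p, k) * L (p, k) (mu', th'))"
      by (intro sum.cong) (auto simp: y_def L_def inner_vec_def)
    also have "\<dots> = (\<Sum>a\<in>pairs n \<times> UNIV. c a * L a (mu', th'))"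
      by (simp add: sum.cartesian_product)
    finally show ?thesis .
  qed
  have sub: "S2 n lam2 tau th' \<ge> S2 n lam2 tau T + (\<Sum>(i, j)\<in>pairs n. g i j \<bullet> (th' i j - T i j))" for th'
  proof -
    have "lam2 * max (norm (T i j) - tau) 0 + g i j \<bullet> (th' i j - T i j) \<le> lam2 * max (norm (th' i j) - tau) 0" for i j
    proof (cases "norm (T i j) < tau")
      case True thus ?thesis using l2 by (simp add: g_def)
    next
      case False
      hence nT: "norm (T i j) > 0" using tp by linarith
      have cs: "T i j \<bullet> th' i j \<le> norm (T i j) * norm (th' i j)" by (rule norm_cauchy_schwarz)
      have "(lam2 / norm (T i j)) * (T i j \<bullet> th' i j) \<le> (lam2 / norm (T i j)) * (norm (T i j) * norm (th' i j))"
        using cs l2 nT by (intro mult_left_mono) auto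
      also have "\<dots> = lam2 * norm (th' i j)" using nT by simp
      finally have h: "(lam2 / norm (T i j)) * (T i j \<bullet> th' i j) \<le> lam2 * norm (th' i j)" .
      have TT: "T i j \<bullet> T i j = norm (T i j) * norm (T i j)" by (simp add: power2_eq_square[symmetric] power2_norm_eq_inner)
      have "lam2 * (norm (th' i j) - tau) \<le> lam2 * max (norm (th' i j) - tau) 0"
        using l2 by (intro mult_left_mono) auto
      thus ?thesis using False h nT TT l2
        by (simp add: g_def inner_diff_right algebra_simps)
    qed
    hence "(\<Sum>(i, j)\<in>pairs n. lam2 * max (norm (T i j) - tau) 0 + g i j \<bullet> (th' i j - T i j))
       \<le> (\<Sum>(i, j)\<in>pairs n. lam2 * max (norm (th' i j) - tau) 0)"
      by (intro sum_mono) auto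
    thus ?thesis by (simp add: S2_def split_def sum.distrib sum_distrib_left)
  qed
  show ?thesis unfolding KKT_point_def
  proof (intro conjI exI allI)
    show "feasible n Mu T" by fact
    show "S2 n lam2 tau th' \<ge> S2 n lam2 tau T + (\<Sum>(i, j)\<in>pairs n. g i j \<bullet> (th' i j - T i j))" for th'
      by (rule sub)
    show "S1 n x lam1 lam2 mu' th' - (\<Sum>(i, j)\<in>pairs n. g i j \<bullet> (th' i j - T i j))
            + (\<Sum>(i, j)\<in>pairs n. y i j \<bullet> (th' i j - (mu' i - mu' j)))
          \<ge> S1 n x lam1 lam2 Mu T" for mu' th'
      using c[rule_format, of "(mu', th')"] fz unfolding ysum by (simp add: f_def)
  qed
qed



lemma S_le_surr:
  assumes "lam2 \<ge> 0"
  shows "S_obj n x lam1 lam2 tau mu th \<le> S_surr n x lam1 lam2 tau thh mu th"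
proof -
  have "(\<Sum>(i, j)\<in>pairs n. TLP (norm (th i j)) tau)
     \<le> (\<Sum>(i, j)\<in>pairs n. norm (th i j) * (if norm (thh i j) < tau then 1 else 0)
          + tau * (if norm (thh i j) \<ge> tau then 1 else 0))"
    by (intro sum_mono) (auto simp: TLP_def)
  also have "\<dots> = (\<Sum>(i, j)\<in>pairs n. norm (th i j) * (if norm (thh i j) < tau then 1 else 0))
     + tau * (\<Sum>(i, j)\<in>pairs n. if norm (thh i j) \<ge> tau then 1 else 0)"
    by (simp add: split_def sum.distrib sum_distrib_left)
  finally have "lam2 * (\<Sum>(i, j)\<in>pairs n. TLP (norm (th i j)) tau) \<le> lam2 * (\<dots>)"
    using assms by (intro mult_left_mono) auto
  thus ?thesis by (simp add: S_obj_def S_surr_def algebra_simps)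
qed

lemma surr_self:
  "S_surr n x lam1 lam2 tau th mu th = S_obj n x lam1 lam2 tau mu th"
proof -
  have "(\<Sum>(i, j)\<in>pairs n. TLP (norm (th i j)) tau)
     = (\<Sum>(i, j)\<in>pairs n. norm (th i j) * (if norm (th i j) < tau then 1 else 0)
          + tau * (if norm (th i j) \<ge> tau then 1 else 0))"
    by (intro sum.cong) (auto simp: TLP_def)
  also have "\<dots> = (\<Sum>(i, j)\<in>pairs n. norm (th i j) * (if norm (th i j) < tau then 1 else 0))
     + tau * (\<Sum>(i, j)\<in>pairs n. if norm (th i j) \<ge> tau then 1 else 0)"
    by (simp add: split_def sum.distrib sum_distrib_left)
  finally show ?thesis by (simp add: S_obj_def S_surr_def algebra_simps)
qed

lemma surr_cong:
  assumes "\<forall>(i, j)\<in>pairs n. (norm (t1 i j) < tau) = (norm (t2 i j) < tau)"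
  shows "S_surr n x lam1 lam2 tau t1 a b = S_surr n x lam1 lam2 tau t2 a b"
proof -
  have "(\<Sum>(i, j)\<in>pairs n. norm (b i j) * (if norm (t1 i j) < tau then 1 else 0))
      = (\<Sum>(i, j)\<in>pairs n. norm (b i j) * (if norm (t2 i j) < tau then 1 else 0))"
    using assms by (intro sum.cong) auto
  moreover have "(\<Sum>(i, j)\<in>pairs n. if norm (t1 i j) \<ge> tau then 1 else (0::real))
      = (\<Sum>(i, j)\<in>pairs n. if norm (t2 i j) \<ge> tau then 1 else 0)"
    using assms by (intro sum.cong) (auto simp: not_less[symmetric])
  ultimately show ?thesis by (simp add: S_surr_def)
qed

theorem theorem2p1:
  fixes n :: nat and x :: "nat \<Rightarrow> real^'p" and lam1 lam2 tau :: real
    and mu :: "nat \<Rightarrow> nat \<Rightarrow> real^'p" and th :: "nat \<Rightarrow> nat \<Rightarrow> nat \<Rightarrow> real^'p"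
  assumes "lam1 > 0" and "lam2 > 0" and "tau > 0"
    and "\<forall>i<n. mu 0 i = x i"
    and "\<forall>(i, j)\<in>pairs n. th 0 i j = x i - x j"
    and "\<forall>m. mdc_step n x lam1 lam2 tau (th m) (mu (Suc m)) (th (Suc m))"
  shows "\<exists>ms. (\<forall>m\<ge>ms. S_obj n x lam1 lam2 tau (mu m) (th m)
                      = S_obj n x lam1 lam2 tau (mu ms) (th ms))
            \<and> KKT_point n x lam1 lam2 tau (mu ms) (th ms)"
proof -
  note l1 = assms(1) and l2 = assms(2) and tp = assms(3) and step = assms(6)
  define Sv where "Sv = (\<lambda>m. S_obj n x lam1 lam2 tau (mu m) (th m))"
  define V where "V = (\<lambda>m. S_surr n x lam1 lam2 tau (th m) (mu (Suc m)) (th (Suc m)))"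
  have feas: "feasible n (mu m) (th m)" for m
  proof (cases m)
    case 0 thus ?thesis using assms(4,5) by (auto simp: feasible_def pairs_def)
  next
    case (Suc k) thus ?thesis using step by (auto simp: mdc_step_def)
  qed
  have vmin: "V m \<le> S_surr n x lam1 lam2 tau (th m) a b" if "feasible n a b" for m a b
    using step that unfolding V_def mdc_step_def by blast
  have A1: "Sv (Suc m) \<le> V m" for m
    unfolding Sv_def V_def using l2 by (intro S_le_surr) simp
  have A2: "V m \<le> Sv m" for m
    using vmin[OF feas[of m], of m] by (simp add: Sv_def surr_self)
  have dec: "V (Suc m) \<le> V m" for m using A1 A2 order_trans by blast
  define Af where "Af = (\<lambda>m. {p\<in>pairs n. norm (th m (fst p) (snd p)) < tau})"
  have Veq: "V m = V m'" if "Af m = Af m'" for m m'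
  proof -
    have c: "\<forall>(i, j)\<in>pairs n. (norm (th m i j) < tau) = (norm (th m' i j) < tau)"
      using that unfolding Af_def by (auto simp: set_eq_iff)
    have "V m \<le> V m'"
      using vmin[OF feas[of "Suc m'"], of m] surr_cong[OF c] by (simp add: V_def)
    moreover have "V m' \<le> V m"
      using vmin[OF feas[of "Suc m"], of m'] surr_cong[OF c] by (simp add: V_def)
    ultimately show ?thesis by simp
  qed
  have fr: "finite (range V)"
  proof (rule finite_subset)
    show "range V \<subseteq> (\<lambda>A. V (SOME m. Af m = A)) ` Pow (pairs n)"
    proof
      fix v assume "v \<in> range V"
      then obtain m where m: "v = V m" by auto
      have "Af (SOME m'. Af m' = Af m) = Af m" by (rule someI) (rule refl)
      hence e: "V (SOME m'. Af m' = Af m) = V m" by (rule Veq)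
      have p: "Af m \<in> Pow (pairs n)" by (auto simp: Af_def)
      show "v \<in> (\<lambda>A. V (SOME m. Af m = A)) ` Pow (pairs n)" unfolding m by (rule rev_image_eqI[where f="\<lambda>A. V (SOME m. Af m = A)", OF p e[symmetric]])
    qed
    show "finite ((\<lambda>A. V (SOME m. Af m = A)) ` Pow (pairs n))" by (simp add: finite_pairs)
  qed
  have "Min (range V) \<in> range V" using fr by (intro Min_in) auto
  then obtain M where M: "V M = Min (range V)" by auto
  have decm: "V m \<le> V M" if "M \<le> m" for m
    using that
  proof (induction m rule: dec_induct)
    case base thus ?case by simp
  next
    case (step k) thus ?case using dec[of k] by linarith
  qed
  have Vc: "V m = V M" if "M \<le> m" for m
  proof -
    have "Min (range V) \<le> V m" by (rule Min_le[OF fr]) simp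
    thus ?thesis using decm[OF that] M by linarith
  qed
  have Sc: "Sv m = V M" if "Suc M \<le> m" for m
  proof -
    define k where "k = m - 1"
    have k: "m = Suc k" "M \<le> k" using that unfolding k_def by auto
    have a: "Sv m \<le> V k" using A1[of k] unfolding k(1) .
    have b: "V m \<le> Sv m" by (rule A2)
    have c: "V k = V M" by (rule Vc[OF k(2)])
    have d: "V m = V M" using k by (intro Vc) simp
    show ?thesis using a b c d by linarith
  qed
  define ms where "ms = Suc M"
  have kkt: "KKT_point n x lam1 lam2 tau (mu ms) (th ms)"
  proof (rule kkt_from_min[OF l1 l2 tp feas])
    show "\<forall>a b. feasible n a b \<longrightarrow> S_surr n x lam1 lam2 tau (th ms) (mu ms) (th ms) \<le> S_surr n x lam1 lam2 tau (th ms) a b"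
    proof (intro allI impI)
      fix a :: "nat \<Rightarrow> real^'p" and b :: "nat \<Rightarrow> nat \<Rightarrow> real^'p" assume fab: "feasible n a b"
      have "S_surr n x lam1 lam2 tau (th ms) (mu ms) (th ms) = Sv ms" by (simp add: Sv_def surr_self)
      also have "\<dots> = V M" using Sc[of ms] unfolding ms_def by simp
      also have "\<dots> = V ms" using Vc[of ms] unfolding ms_def by simp
      also have "\<dots> \<le> S_surr n x lam1 lam2 tau (th ms) a b" by (rule vmin[OF fab])
      finally show "S_surr n x lam1 lam2 tau (th ms) (mu ms) (th ms) \<le> S_surr n x lam1 lam2 tau (th ms) a b" .
    qed
  qed
  show ?thesis
  proof (intro exI conjI allI impI)
    show "KKT_point n x lam1 lam2 tau (mu ms) (th ms)" by (rule kkt)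
    fix m assume "ms \<le> m"
    thus "S_obj n x lam1 lam2 tau (mu m) (th m) = S_obj n x lam1 lam2 tau (mu ms) (th ms)"
    proof -
      have "Sv m = V M" using \<open>ms \<le> m\<close> unfolding ms_def by (intro Sc)
      moreover have "Sv ms = V M" unfolding ms_def by (intro Sc) simp
      ultimately show ?thesis unfolding Sv_def by simp
    qed
  qed
qed

end
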